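(* Let $\nu>0$, let $K$ be a smooth positive function with antiderivative $J(u)=\int K(u)\,du$ assumed invertible, and let $A\neq 0$, $B$, $D\neq 0$, $Q$ be constants. Suppose $C(u)=D\,K(u)\left(AJ(u)+B\right)^{1/A}$. Then, on any region of $z>0$, $t>0$ where $Q+\frac{2(2A+1-\nu)}{D}t>0$ and the argument below lies in the range of $J$, $$u(z,t)=J^{-1}\!\left(\frac{1}{A}z^{-2A}\left(Q+\frac{2(2A+1-\nu)}{D}t\right)^{A}-\frac{B}{A}\right)$$ is a solution of $C(u)u_t=z^{-\nu}\left(K(u)z^{\nu}u_z\right)_z$. *)

theory Defs
  imports "HOL-Analysis.Analysis"
begin

definition smooth_fun :: "(real \<Rightarrow> real) \<Rightarrow> bool" where
  "smooth_fun f \<longleftrightarrow> (\<forall>n x. ((deriv ^^ n) f) differentiable (at x))"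

end

theory Submission
  imports Defs
begin

lemma inv_J_deriv:
  fixes J K :: "real \<Rightarrow> real"
  assumes J_antideriv: "\<forall>x. (J has_real_derivative K x) (at x)"
    and K_pos: "\<forall>x. K x > 0"
    and J_inj: "inj J"
    and x: "x \<in> range J"
  shows "(inv J has_real_derivative inverse (K (inv J x))) (at x)"
proof -
  obtain y where y: "x = J y" using x by auto
  have iy: "inv J x = y" using y J_inj by simp
  have cont: "continuous_on UNIV J"
    using J_antideriv by (meson DERIV_isCont continuous_at_imp_continuous_on)
  have "(inv J has_derivative (*) (inverse (K y))) (at (J y))"
  proof (rule has_derivative_inverse_strong[of UNIV y J "inv J" "(*) (K y)"])
    show "(J has_derivative (*) (K y)) (at y)"
      using J_antideriv by (simp add: has_field_derivative_def)
    show "(*) (K y) \<circ> (*) (inverse (K y)) = id"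
      using K_pos[rule_format, of y] by (auto simp: fun_eq_iff)
  qed (use cont J_inj in auto)
  then show ?thesis using y iy by (simp add: has_field_derivative_def)
qed

theorem mainTheorem7:
  fixes \<nu> A B D Q :: real
    and K J C :: "real \<Rightarrow> real"
    and u :: "real \<Rightarrow> real \<Rightarrow> real"
    and S :: "(real \<times> real) set"
  assumes nu_pos: "\<nu> > 0"
    and K_smooth: "smooth_fun K"
    and K_pos: "\<forall>x. K x > 0"
    and J_antideriv: "\<forall>x. (J has_real_derivative K x) (at x)"
    and J_inj: "inj J"
    and A_nz: "A \<noteq> 0"
    and D_nz: "D \<noteq> 0"
    and C_def: "\<forall>x. C x = D * K x * (A * J x + B) powr (1 / A)"
    and S_open: "open S"
    and S_pos: "\<forall>(z, t) \<in> S. z > 0 \<and> t > 0"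
    and S_cond: "\<forall>(z, t) \<in> S. Q + 2 * (2 * A + 1 - \<nu>) / D * t > 0"
    and S_range: "\<forall>(z, t) \<in> S.
        1 / A * z powr (-2 * A) * (Q + 2 * (2 * A + 1 - \<nu>) / D * t) powr A - B / A \<in> range J"
    and u_def: "\<forall>z t. u z t = inv J
        (1 / A * z powr (-2 * A) * (Q + 2 * (2 * A + 1 - \<nu>) / D * t) powr A - B / A)"
  shows "\<forall>(z, t) \<in> S.
      (\<lambda>s. u z s) differentiable (at t) \<and>
      (\<lambda>y. u y t) differentiable (at z) \<and>
      (\<lambda>y. K (u y t) * y powr \<nu> * deriv (\<lambda>y'. u y' t) y) differentiable (at z) \<and>
      C (u z t) * deriv (\<lambda>s. u z s) t =
        z powr (-\<nu>) * deriv (\<lambda>y. K (u y t) * y powr \<nu> * deriv (\<lambda>y'. u y' t) y) z"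
proof (clarify)
  fix z t assume zt: "(z, t) \<in> S"
  define c where "c = 2 * (2 * A + 1 - \<nu>) / D"
  define P where "P = (\<lambda>y s. 1 / A * y powr (-2 * A) * (Q + c * s) powr A - B / A)"
  define T where "T = Q + c * t"
  have u_eq: "\<And>y s. u y s = inv J (P y s)" using u_def by (simp add: P_def c_def)
  have Tpos: "T > 0" using S_cond zt by (auto simp: T_def c_def)
  have zpos: "z > 0" using S_pos zt by auto
  have Dc: "D * c = 2 * (2 * A + 1 - \<nu>)" using D_nz by (simp add: c_def)
  define N where "N = (\<lambda>y. (y, t)) -` S"
  have N_open: "open N" unfolding N_def
    by (rule open_vimage[OF S_open]) (intro continuous_intros)
  have zN: "z \<in> N" using zt by (simp add: N_def)
  have Npos: "y > 0" if "y \<in> N" for y using that S_pos by (auto simp: N_def)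
  have Nrange: "P y t \<in> range J" if "y \<in> N" for y
    using that S_range by (auto simp: N_def P_def c_def)
  have invd: "\<And>x. x \<in> range J \<Longrightarrow> (inv J has_real_derivative inverse (K (inv J x))) (at x)"
    using inv_J_deriv[OF J_antideriv K_pos J_inj] by blast
  have Pt: "((\<lambda>s. P z s) has_real_derivative 1 / A * z powr (-2 * A) * (A * T powr (A - 1) * c)) (at t)"
    unfolding P_def T_def using Tpos unfolding T_def
    by (auto intro!: derivative_eq_intros)
  have ut: "((\<lambda>s. u z s) has_real_derivative
      inverse (K (u z t)) * (1 / A * z powr (-2 * A) * (A * T powr (A - 1) * c))) (at t)"
    unfolding u_eq using DERIV_chain2[OF invd[OF Nrange[OF zN]] Pt] by simp
  have Pz: "((\<lambda>y. P y t) has_real_derivative -2 * y powr (-2 * A - 1) * T powr A) (at y)"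
    if "y \<in> N" for y
  proof -
    have "((\<lambda>y. P y t) has_real_derivative 1 / A * ((-2 * A) * y powr (-2 * A - 1)) * T powr A) (at y)"
      unfolding P_def T_def using Npos[OF that]
      by (auto intro!: derivative_eq_intros)
    then show ?thesis using A_nz by simp
  qed
  have uz: "((\<lambda>y. u y t) has_real_derivative
      inverse (K (u y t)) * (-2 * y powr (-2 * A - 1) * T powr A)) (at y)" if "y \<in> N" for y
    unfolding u_eq using DERIV_chain2[OF invd[OF Nrange[OF that]] Pz[OF that]] by simp
  have Feq: "K (u y t) * y powr \<nu> * deriv (\<lambda>y'. u y' t) y = -2 * T powr A * y powr (\<nu> - 2 * A - 1)"
    if "y \<in> N" for y
  proof -
    have "deriv (\<lambda>y'. u y' t) y = inverse (K (u y t)) * (-2 * y powr (-2 * A - 1) * T powr A)"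
      using uz[OF that] by (rule DERIV_imp_deriv)
    moreover have "y powr \<nu> * y powr (-2 * A - 1) = y powr (\<nu> - 2 * A - 1)"
      using Npos[OF that] by (simp add: powr_add[symmetric] algebra_simps)
    ultimately show ?thesis using K_pos[rule_format, of "u y t"]
      by (simp add: field_simps)
  qed
  have G: "((\<lambda>y. -2 * T powr A * y powr (\<nu> - 2 * A - 1)) has_real_derivative
      -2 * T powr A * ((\<nu> - 2 * A - 1) * z powr (\<nu> - 2 * A - 1 - 1))) (at z)"
    using zpos by (auto intro!: derivative_eq_intros)
  have F: "((\<lambda>y. K (u y t) * y powr \<nu> * deriv (\<lambda>y'. u y' t) y) has_real_derivative
      -2 * T powr A * ((\<nu> - 2 * A - 1) * z powr (\<nu> - 2 * A - 1 - 1))) (at z)"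
    by (rule has_field_derivative_transform_within_open[OF G N_open zN]) (simp add: Feq)
  have Jz: "J (u z t) = P z t" unfolding u_eq by (rule f_inv_into_f[OF Nrange[OF zN]])
  have AJB: "A * J (u z t) + B = z powr (-2 * A) * T powr A"
    using A_nz by (simp add: Jz P_def T_def field_simps)
  have pw: "(A * J (u z t) + B) powr (1 / A) = z powr (-2) * T"
    using A_nz zpos Tpos by (simp add: AJB powr_mult powr_powr)
  have TT: "T * T powr (A - 1) = T powr A"
  proof -
    have "T powr A = T powr (1 + (A - 1))" by simp
    also have "\<dots> = T * T powr (A - 1)" using Tpos by (simp only: powr_add) simp
    finally show ?thesis by simp
  qed
  have zz1: "z powr (-2) * z powr (-2 * A) = z powr (-2 * A - 2)"
    by (subst powr_add[symmetric], rule arg_cong[where f="(powr) z"], simp)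
  have zz2: "z powr (-\<nu>) * z powr (\<nu> - 2 * A - 1 - 1) = z powr (-2 * A - 2)"
    by (subst powr_add[symmetric], rule arg_cong[where f="(powr) z"], simp)
  have lhs: "C (u z t) * deriv (\<lambda>s. u z s) t = D * c * (z powr (-2 * A - 2) * T powr A)"
  proof -
    have "C (u z t) * deriv (\<lambda>s. u z s) t =
        D * K (u z t) * (z powr (-2) * T) * (inverse (K (u z t)) * (1 / A * z powr (-2 * A) * (A * T powr (A - 1) * c)))"
      using C_def pw DERIV_imp_deriv[OF ut] by simp
    also have "\<dots> = D * c * ((z powr (-2) * z powr (-2 * A)) * (T * T powr (A - 1)))"
      using K_pos[rule_format, of "u z t"] A_nz by (simp add: field_simps)
    finally show ?thesis unfolding zz1 TT .
  qed
  have rhs: "z powr (-\<nu>) * deriv (\<lambda>y. K (u y t) * y powr \<nu> * deriv (\<lambda>y'. u y' t) y) z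
      = -2 * (\<nu> - 2 * A - 1) * (z powr (-2 * A - 2) * T powr A)"
  proof -
    have "z powr (-\<nu>) * deriv (\<lambda>y. K (u y t) * y powr \<nu> * deriv (\<lambda>y'. u y' t) y) z
       = -2 * (\<nu> - 2 * A - 1) * ((z powr (-\<nu>) * z powr (\<nu> - 2 * A - 1 - 1)) * T powr A)"
      unfolding DERIV_imp_deriv[OF F] by (simp only: mult_ac)
    then show ?thesis unfolding zz2 .
  qed
  show "(\<lambda>s. u z s) differentiable (at t) \<and>
      (\<lambda>y. u y t) differentiable (at z) \<and>
      (\<lambda>y. K (u y t) * y powr \<nu> * deriv (\<lambda>y'. u y' t) y) differentiable (at z) \<and>
      C (u z t) * deriv (\<lambda>s. u z s) t =
        z powr (-\<nu>) * deriv (\<lambda>y. K (u y t) * y powr \<nu> * deriv (\<lambda>y'. u y' t) y) z"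
    using ut uz[OF zN] F lhs rhs Dc
    by (auto simp: real_differentiable_def algebra_simps)
qed

end
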